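(* Let $\mathcal{D}_u$ be a finite set of inputs (the unlabeled pool) and let $\Omega=\mathcal{D}_u$. Fix real hyperparameters $\alpha,\beta$ with $0\le \alpha,\ \beta,\ \alpha+\beta\le 1$. Let $f:2^{\Omega}\to\mathbb{R}$ be a set function such that for every $S\subseteq\Omega$ and every $x_i\in\Omega\setminus S$, $$f(S\cup\{x_i\})-f(S)=\alpha\,VAP(x_i)+\beta\, d(S,x_i)+(1-\alpha-\beta)\,R(S,x_i),$$ where $VAP$, $d$ and $R$ are as defined in the context. Then $f$ is monotone non-decreasing, i.e. $f(S\cup\{x\})\ge f(S)$ for every $S\subseteq\Omega$ and $x\in\Omega$.
   Context: Let $h_\theta$ be a fixed classifier mapping each input $x$ to a probability vector $h_\theta(x)$ over $K$ classes (softmax output), and let $D_{KL}(p\,\|\,q)=\sum_k p_k\ln(p_k/q_k)$ denote the KL divergence. Fix $N\ge1$ and, for each input $x$, perturbations $r_1,\dots,r_N$ (with $\|r_i\|\le\epsilon$). The Virtual Adversarial Pairwise score is $$VAP(x)=\frac{1}{N^2}\Big(\sum_{i=1}^N D_{KL}(h_\theta(x)\,\|\,h_\theta(x+r_i))+\sum_{i=1}^N\sum_{j=1,j\ne i}^N D_{KL}(h_\theta(x+r_i)\,\|\,h_\theta(x+r_j))\Big).$$ The diversity score is $d(S,x_i)=\min_{x\in S} D(x,x_i)$ with $D(x_j,x_i)=D_{KL}(h_\theta(x_j)\,\|\,h_\theta(x_i))$. For inputs $x_i,x_j$ define the similarity $s_{ij}=-\ln\big(1-BC(h_\theta(x_i),h_\theta(x_j))\big)$,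 where $BC(p,q)=\sum_k\sqrt{p_kq_k}$ is the Bhattacharyya coefficient. The representativeness score is $R(S,x_i)=\sum_{x_k\in\mathcal{D}_u}\max\big(0,\ s_{ki}-\max_{x_j\in S}s_{kj}\big)$. *)

theory Defs
  imports "HOL-Analysis.Analysis"
begin

text \<open>Probability vectors over K classes are represented as functions nat \<Rightarrow> real,
  with classes indexed by 0..<K.\<close>

definition KL :: "nat \<Rightarrow> (nat \<Rightarrow> real) \<Rightarrow> (nat \<Rightarrow> real) \<Rightarrow> real" where
  "KL K p q = (\<Sum>k<K. p k * ln (p k / q k))"

definition VAP :: "nat \<Rightarrow> ('x::real_normed_vector \<Rightarrow> nat \<Rightarrow> real) \<Rightarrow> nat
    \<Rightarrow> ('x \<Rightarrow> nat \<Rightarrow> 'x) \<Rightarrow> 'x \<Rightarrow> real" where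
  "VAP K h N r x = (1 / real N ^ 2) *
     ((\<Sum>i\<in>{1..N}. KL K (h x) (h (x + r x i)))
      + (\<Sum>i\<in>{1..N}. \<Sum>j\<in>{1..N} - {i}. KL K (h (x + r x i)) (h (x + r x j))))"

definition div_score :: "nat \<Rightarrow> ('x \<Rightarrow> nat \<Rightarrow> real) \<Rightarrow> 'x set \<Rightarrow> 'x \<Rightarrow> real" where
  "div_score K h S xi = (if S = {} then 0 else Min ((\<lambda>x. KL K (h x) (h xi)) ` S))"

definition BC :: "nat \<Rightarrow> (nat \<Rightarrow> real) \<Rightarrow> (nat \<Rightarrow> real) \<Rightarrow> real" where
  "BC K p q = (\<Sum>k<K. sqrt (p k * q k))"

definition sim :: "nat \<Rightarrow> ('x \<Rightarrow> nat \<Rightarrow> real) \<Rightarrow> 'x \<Rightarrow> 'x \<Rightarrow> real" where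
  "sim K h xi xj = - ln (1 - BC K (h xi) (h xj))"

definition rep_score :: "nat \<Rightarrow> ('x \<Rightarrow> nat \<Rightarrow> real) \<Rightarrow> 'x set \<Rightarrow> 'x set \<Rightarrow> 'x \<Rightarrow> real" where
  "rep_score K h Du S xi = (\<Sum>xk\<in>Du. max 0 (sim K h xk xi -
      (if S = {} then 0 else Max ((\<lambda>xj. sim K h xk xj) ` S))))"

end

theory Submission
  imports Defs
begin

lemma KL_nonneg:
  assumes p: "\<And>k. k < K \<Longrightarrow> p k > 0" and q: "\<And>k. k < K \<Longrightarrow> q k > 0"
    and sp: "(\<Sum>k<K. p k) = 1" and sq: "(\<Sum>k<K. q k) = 1"
  shows "KL K p q \<ge> 0"
proof -
  have "\<And>k. k < K \<Longrightarrow> p k * ln (p k / q k) \<ge> p k - q k"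
  proof -
    fix k assume k: "k < K"
    have pk: "p k > 0" and qk: "q k > 0" using p q k by auto
    have "ln (q k / p k) \<le> q k / p k - 1" using pk qk by (intro ln_le_minus_one) simp
    moreover have "ln (p k / q k) = - ln (q k / p k)" using pk qk by (simp add: ln_div)
    ultimately have "ln (p k / q k) \<ge> 1 - q k / p k" by simp
    hence "p k * ln (p k / q k) \<ge> p k * (1 - q k / p k)" using pk by (intro mult_left_mono) auto
    also have "p k * (1 - q k / p k) = p k - q k" using pk by (simp add: field_simps)
    finally show "p k * ln (p k / q k) \<ge> p k - q k" .
  qed
  hence "(\<Sum>k<K. p k - q k) \<le> (\<Sum>k<K. p k * ln (p k / q k))" by (intro sum_mono) auto
  thus ?thesis using sp sq by (simp add: KL_def sum_subtractf)
qed

theorem lemma2: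
  fixes K N :: nat and h :: "'x::real_normed_vector \<Rightarrow> nat \<Rightarrow> real"
    and r :: "'x \<Rightarrow> nat \<Rightarrow> 'x" and \<epsilon> \<alpha> \<beta> :: real
    and Du :: "'x set" and f :: "'x set \<Rightarrow> real"
  assumes softmax_pos: "\<And>x k. k < K \<Longrightarrow> h x k > 0"
    and softmax_sum: "\<And>x. (\<Sum>k<K. h x k) = 1"
    and N: "N \<ge> 1"
    and pert: "\<And>x i. i \<in> {1..N} \<Longrightarrow> norm (r x i) \<le> \<epsilon>"
    and fin: "finite Du"
    and hyp: "0 \<le> \<alpha>" "0 \<le> \<beta>" "\<alpha> + \<beta> \<le> 1"
    and gain: "\<And>S xi. S \<subseteq> Du \<Longrightarrow> xi \<in> Du - S \<Longrightarrow>
       f (S \<union> {xi}) - f S = \<alpha> * VAP K h N r xi + \<beta> * div_score K h S xi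
          + (1 - \<alpha> - \<beta>) * rep_score K h Du S xi"
  shows "\<forall>S x. S \<subseteq> Du \<and> x \<in> Du \<longrightarrow> f (S \<union> {x}) \<ge> f S"
proof (intro allI impI)
  fix S x assume a: "S \<subseteq> Du \<and> x \<in> Du"
  have kl: "\<And>a b. KL K (h a) (h b) \<ge> 0"
    by (rule KL_nonneg) (auto intro: softmax_pos softmax_sum)
  show "f (S \<union> {x}) \<ge> f S"
  proof (cases "x \<in> S")
    case True thus ?thesis by (simp add: insert_absorb)
  next
    case False
    have v: "VAP K h N r x \<ge> 0" unfolding VAP_def
      by (intro mult_nonneg_nonneg add_nonneg_nonneg sum_nonneg kl) auto
    have fS: "finite S" using a fin finite_subset by blast
    have d: "div_score K h S x \<ge> 0" unfolding div_score_def
      using fS kl by (auto simp: Min_ge_iff)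
    have rr: "rep_score K h Du S x \<ge> 0" unfolding rep_score_def
      by (intro sum_nonneg) auto
    have "f (S \<union> {x}) - f S \<ge> 0"
      using gain[of S x] a False v d rr hyp
      by (simp add: mult_nonneg_nonneg add_nonneg_nonneg)
    thus ?thesis by simp
  qed
qed

end
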